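(* Let $q\geq4$ be an even integer, $n=q^2-1$, and let $A_0=I,A_1,A_2,A_3$ be the adjacency matrices of a symmetric 3-class association scheme on $n$ points with first eigenmatrix \[ P=\begin{bmatrix}1&\frac{q^2}{2}-q&\frac{q^2}{2}&q-2\\ 1&\frac q2&-\frac q2&-1\\ 1&-\frac q2+1&-\frac q2&q-2\\ 1&-\frac q2&\frac q2&-1\end{bmatrix}. \] For a real number $r$ with $r^2=(17q-1)(q-1)$ put $a_{0,1}=\frac{-(q-1)(q-2)+(q+2)r}{2q(q+1)}$, $a_{0,2}=\frac{(q+2)(q-1)-(q-2)r}{2q(q-3)}$, $a_{0,3}=\frac{5q^2-2q-19-(q-1)r}{2(q+1)(q-3)}$, $a_{1,2}=\frac{2(-q^4+2q^3+4q^2-10q+1+(q-1)r)}{q^2(q+1)(q-3)}$, $a_{1,3}=-a_{0,2}$, and let $W=A_0+w_1A_1+w_2A_2+w_3A_3$ where $w_1+\frac1{w_1}=a_{0,1}$ and $w_i=\frac{w_1^2-1}{a_{1,i}w_1-a_{0,i}}$ for $i=2,3$ (this $W$ is a type-II matrix). Let $W_+$ be such a matrix obtained with $r>0$ and $W_-$ such a matrix obtained with $r<0$. Then $W_+$ and $W_-$ are inequivalent.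
   Context: A symmetric association scheme with adjacency matrices $A_0=I,\dots,A_d$: symmetric $(0,1)$-matrices summing to $J$ whose span is closed under multiplication; with primitive idempotents $E_0=\frac1nJ,\dots,E_d$, the first eigenmatrix is defined by $A_j=\sum_iP_{i,j}E_i$. A type-II matrix is an $n\times n$ matrix $W$ with nonzero complex entries and $W(W^{(-)})^\top=nI$, $W^{(-)}$ the entrywise inverse. Two type-II matrices $W_1,W_2$ are equivalent if there exist invertible diagonal matrices $D,D'$ and permutation matrices $T,T'$ with $DW_1D'=TW_2T'$. *)

theory Defs
  imports "HOL-Analysis.Analysis"
begin

definition cscale :: "complex \<Rightarrow> complex^'n^'n \<Rightarrow> complex^'n^'n" where
  "cscale c M = (\<chi> a b. c * M $ a $ b)"

definition allones :: "complex^'n^'n" where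
  "allones = (\<chi> a b. 1)"

definition assoc_scheme :: "nat \<Rightarrow> (nat \<Rightarrow> complex^'n^'n) \<Rightarrow> bool" where
  "assoc_scheme d A \<longleftrightarrow>
     A 0 = mat 1 \<and>
     (\<forall>i\<le>d. (\<forall>a b. A i $ a $ b \<in> {0, 1}) \<and> transpose (A i) = A i \<and> A i \<noteq> 0) \<and>
     (\<Sum>i\<le>d. A i) = allones \<and>
     (\<forall>i\<le>d. \<forall>j\<le>d. \<exists>c. A i ** A j = (\<Sum>k\<le>d. cscale (c k) (A k)))"

definition first_eigenmatrix ::
  "nat \<Rightarrow> (nat \<Rightarrow> complex^'n^'n) \<Rightarrow> (nat \<Rightarrow> nat \<Rightarrow> complex) \<Rightarrow> bool" where
  "first_eigenmatrix d A P \<longleftrightarrow>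
     (\<exists>E :: nat \<Rightarrow> complex^'n^'n.
        E 0 = cscale (1 / of_nat CARD('n)) allones \<and>
        (\<forall>i\<le>d. E i \<noteq> 0) \<and>
        (\<forall>i\<le>d. \<forall>j\<le>d. E i ** E j = (if i = j then E i else 0)) \<and>
        (\<Sum>i\<le>d. E i) = mat 1 \<and>
        (\<forall>j\<le>d. A j = (\<Sum>i\<le>d. cscale (P i j) (E i))))"

definition entry_inv :: "complex^'n^'n \<Rightarrow> complex^'n^'n" where
  "entry_inv W = (\<chi> a b. inverse (W $ a $ b))"

definition type_II :: "complex^'n^'n \<Rightarrow> bool" where
  "type_II W \<longleftrightarrow> (\<forall>a b. W $ a $ b \<noteq> 0) \<and>
     W ** transpose (entry_inv W) = cscale (of_nat CARD('n)) (mat 1)"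

definition diag_invertible :: "complex^'n^'n \<Rightarrow> bool" where
  "diag_invertible D \<longleftrightarrow> (\<forall>a b. a \<noteq> b \<longrightarrow> D $ a $ b = 0) \<and> invertible D"

definition perm_matrix :: "complex^'n^'n \<Rightarrow> bool" where
  "perm_matrix T \<longleftrightarrow> (\<exists>\<sigma>. \<sigma> permutes (UNIV :: 'n set) \<and>
     T = (\<chi> a b. if \<sigma> a = b then 1 else 0))"

definition type_II_equiv :: "complex^'n^'n \<Rightarrow> complex^'n^'n \<Rightarrow> bool" where
  "type_II_equiv W1 W2 \<longleftrightarrow> (\<exists>D D' T T'. diag_invertible D \<and> diag_invertible D' \<and>
     perm_matrix T \<and> perm_matrix T' \<and> D ** W1 ** D' = T ** W2 ** T')"

definition Pmat :: "nat \<Rightarrow> nat \<Rightarrow> nat \<Rightarrow> real" where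
  "Pmat qn i j = (let q = real qn in
     [[1, q^2/2 - q, q^2/2, q - 2],
      [1, q/2, -q/2, -1],
      [1, -q/2 + 1, -q/2, q - 2],
      [1, -q/2, q/2, -1]] ! i ! j)"

definition a01 :: "nat \<Rightarrow> real \<Rightarrow> real" where
  "a01 qn r = (let q = real qn in (-(q-1)*(q-2) + (q+2)*r) / (2*q*(q+1)))"

definition a02 :: "nat \<Rightarrow> real \<Rightarrow> real" where
  "a02 qn r = (let q = real qn in ((q+2)*(q-1) - (q-2)*r) / (2*q*(q-3)))"

definition a03 :: "nat \<Rightarrow> real \<Rightarrow> real" where
  "a03 qn r = (let q = real qn in (5*q^2 - 2*q - 19 - (q-1)*r) / (2*(q+1)*(q-3)))"

definition a12 :: "nat \<Rightarrow> real \<Rightarrow> real" where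
  "a12 qn r = (let q = real qn in
     2*(-(q^4) + 2*q^3 + 4*q^2 - 10*q + 1 + (q-1)*r) / (q^2*(q+1)*(q-3)))"

definition a13 :: "nat \<Rightarrow> real \<Rightarrow> real" where
  "a13 qn r = - a02 qn r"

definition wden2 :: "nat \<Rightarrow> real \<Rightarrow> complex \<Rightarrow> complex" where
  "wden2 q r w1 = of_real (a12 q r) * w1 - of_real (a02 q r)"

definition wden3 :: "nat \<Rightarrow> real \<Rightarrow> complex \<Rightarrow> complex" where
  "wden3 q r w1 = of_real (a13 q r) * w1 - of_real (a03 q r)"

definition Wmat :: "(nat \<Rightarrow> complex^'n^'n) \<Rightarrow> nat \<Rightarrow> real \<Rightarrow> complex \<Rightarrow> complex^'n^'n" where
  "Wmat A q r w1 = A 0 + cscale w1 (A 1)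
     + cscale ((w1^2 - 1) / wden2 q r w1) (A 2)
     + cscale ((w1^2 - 1) / wden3 q r w1) (A 3)"

end

theory Submission
  imports Defs
begin

lemma quad_real:
  fixes w :: complex and a :: real
  assumes "w \<noteq> 0" "w + 1 / w = of_real a" "a^2 > 4"
  shows "w \<in> \<real>"
proof -
  have e: "w^2 + 1 = of_real a * w" using assms(1,2)
    by (metis (no_types, lifting) distrib_right nonzero_eq_divide_eq power2_eq_square)
  have r: "Re w ^2 - Im w ^2 + 1 = a * Re w" and i: "2 * Re w * Im w = a * Im w"
    using arg_cong[OF e, of Re] arg_cong[OF e, of Im] by (simp_all add: power2_eq_square)
  have "Im w = 0"
  proof (rule ccontr)
    assume "Im w \<noteq> 0"
    then have "2 * Re w = a" using i by simp
    then have h2: "a = 2 * Re w" by simp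
    have "Im w^2 = 1 - Re w^2" using r h2 by (simp add: power2_eq_square algebra_simps)
    moreover have "a^2 = 4 * Re w^2" using h2 by (simp add: power2_eq_square)
    ultimately show False using assms(3) zero_le_power2[of "Im w"] by linarith
  qed
  then show ?thesis by (simp add: complex_is_Real_iff)
qed

lemma quad_nonreal:
  fixes w :: complex and a :: real
  assumes "w \<noteq> 0" "w + 1 / w = of_real a" "a^2 < 4" "a \<noteq> 0"
  shows "w^2 \<notin> \<real>"
proof
  assume h: "w^2 \<in> \<real>"
  have e: "w^2 + 1 = of_real a * w" using assms(1,2)
    by (metis (no_types, lifting) distrib_right nonzero_eq_divide_eq power2_eq_square)
  have r: "Re w ^2 - Im w ^2 + 1 = a * Re w" and i: "2 * Re w * Im w = a * Im w"
    using arg_cong[OF e, of Re] arg_cong[OF e, of Im] by (simp_all add: power2_eq_square)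
  have "Im (w^2) = 0" using h by (simp add: complex_is_Real_iff)
  then have "Re w = 0 \<or> Im w = 0" by (auto simp add: power2_eq_square)
  then show False
  proof
    assume "Re w = 0" then show False using i r assms by (auto)
  next
    assume "Im w = 0"
    then have "(2 * Re w - a)^2 = a^2 - 4" using r by (simp add: power2_eq_square algebra_simps)
    then show False using assms(3) zero_le_power2[of "2 * Re w - a"] by linarith
  qed
qed

lemma a01_pos:
  assumes q: "real q \<ge> 4" and r: "r^2 = (17 * real q - 1) * (real q - 1)" "r > 0"
  shows "(a01 q r)^2 < 4" "a01 q r \<noteq> 0"
proof -
  define x where "x = real q"
  have x4: "x \<ge> 4" using q x_def by simp
  have r2: "r^2 = (17 * x - 1) * (x - 1)" using r x_def by simp
  have sq: "((x+2)*r)^2 < (5*x^2+x+2)^2"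
  proof -
    have "((x+2)*r)^2 = (x+2)^2 * ((17 * x - 1) * (x - 1))" by (simp add: power_mult_distrib r2)
    moreover have "(5*x^2+x+2)^2 - (x+2)^2 * ((17 * x - 1) * (x - 1)) = 8*x*(x-3)^2*(x+1)"
      by (simp add: power2_eq_square algebra_simps)
    moreover have "8*x*(x-3)^2*(x+1) > 0" using x4 by simp
    ultimately show ?thesis by linarith
  qed
  have l1: "(x+2)*r < 5*x^2+x+2"
    by (rule power_less_imp_less_base[OF sq]) (use x4 in simp)
  have sq2: "((x-1)*(x-2))^2 < ((x+2)*r)^2"
  proof -
    have "((x+2)*r)^2 = (x+2)^2 * ((17 * x - 1) * (x - 1))" by (simp add: power_mult_distrib r2)
    moreover have "(x+2)^2 * ((17 * x - 1) * (x - 1)) - ((x-1)*(x-2))^2 = 16*x^4+56*x^3-16*x^2-56*x"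
      by (simp add: power2_eq_square algebra_simps power4_eq_xxxx power3_eq_cube)
    moreover have "16*x^4+56*x^3-16*x^2-56*x > 0"
    proof -
      have "16*x^4+56*x^3-16*x^2-56*x = 8*x*(x^2-1)*(2*x+7)" by (simp add: power2_eq_square algebra_simps power4_eq_xxxx power3_eq_cube)
      moreover have "x*x \<ge> 4*4" using x4 by (intro mult_mono) auto
      then have "x^2 - 1 > 0" by (simp add: power2_eq_square)
      ultimately show ?thesis using x4 by simp
    qed
    ultimately show ?thesis by simp
  qed
  have l2: "(x-1)*(x-2) < (x+2)*r"
    by (rule power_less_imp_less_base[OF sq2]) (use x4 r in simp)
  have den: "2*x*(x+1) > 0" using x4 by simp
  have a: "a01 q r = (-(x-1)*(x-2) + (x+2)*r) / (2*x*(x+1))" by (simp add: a01_def x_def Let_def)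
  have "a01 q r < 2" unfolding a using den l1 by (simp add: divide_less_eq algebra_simps power2_eq_square)
  moreover have "a01 q r > 0" unfolding a using den l2 by (simp add: zero_less_divide_iff algebra_simps)
  ultimately have "a01 q r * a01 q r < 2 * 2" by (intro mult_strict_mono) auto
  then show "(a01 q r)^2 < 4" by (simp add: power2_eq_square)
  show "a01 q r \<noteq> 0" using \<open>a01 q r > 0\<close> by simp
qed

lemma a01_neg:
  assumes q: "real q \<ge> 4" and r: "r^2 = (17 * real q - 1) * (real q - 1)" "r < 0"
  shows "(a01 q r)^2 > 4"
proof -
  define x where "x = real q"
  define t where "t = - r"
  have x4: "x \<ge> 4" using q x_def by simp
  have t0: "t > 0" using r t_def by simp
  have r2: "t^2 = (17 * x - 1) * (x - 1)" using r x_def t_def by simp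
  have sq: "(3*x^2+7*x-2)^2 < ((x+2)*t)^2"
  proof -
    have "((x+2)*t)^2 = (x+2)^2 * ((17 * x - 1) * (x - 1))" by (simp add: power_mult_distrib r2)
    moreover have "(x+2)^2 * ((17 * x - 1) * (x - 1)) - (3*x^2+7*x-2)^2 = 8*x*(x+1)*(x^2-5)"
      by (simp add: power2_eq_square algebra_simps power4_eq_xxxx power3_eq_cube)
    moreover have "x*x \<ge> 4*4" using x4 by (intro mult_mono) auto
    then have "x^2 - 5 > 0" by (simp add: power2_eq_square)
    then have "8*x*(x+1)*(x^2-5) > 0" using x4 by simp
    ultimately show ?thesis by linarith
  qed
  have l1: "3*x^2+7*x-2 < (x+2)*t"
    by (rule power_less_imp_less_base[OF sq]) (use x4 t0 in simp)
  have den: "2*x*(x+1) > 0" using x4 by simp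
  have a: "a01 q r = (-(x-1)*(x-2) - (x+2)*t) / (2*x*(x+1))" by (simp add: a01_def x_def t_def Let_def)
  have "a01 q r < -2" unfolding a using den l1 by (simp add: divide_less_eq algebra_simps power2_eq_square)
  then have "2 * 2 < (- a01 q r) * (- a01 q r)" by (intro mult_strict_mono) auto
  then show ?thesis by (simp add: power2_eq_square)
qed

definition real_mat :: "complex^'n^'n \<Rightarrow> bool" where
  "real_mat M \<longleftrightarrow> (\<forall>i j. M $ i $ j \<in> \<real>)"

lemma mult_comp: "(M ** N) $ i $ j = (\<Sum>k\<in>UNIV. M $ i $ k * N $ k $ j)"
  by (simp add: matrix_matrix_mult_def)

lemma real_mat_mult: "real_mat M \<Longrightarrow> real_mat N \<Longrightarrow> real_mat (M ** N)"
  unfolding real_mat_def mult_comp by auto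

lemma perm_real: "perm_matrix T \<Longrightarrow> real_mat T"
  unfolding perm_matrix_def real_mat_def by auto

lemma diag_left:
  assumes "diag_invertible D"
  shows "(D ** M) $ i $ j = D $ i $ i * M $ i $ j"
proof -
  have "(D ** M) $ i $ j = (\<Sum>k\<in>UNIV. if k = i then D $ i $ i * M $ i $ j else 0)"
    unfolding mult_comp
    by (rule sum.cong) (use assms in \<open>auto simp: diag_invertible_def\<close>)
  then show ?thesis by simp
qed

lemma diag_right:
  assumes "diag_invertible D"
  shows "(M ** D) $ i $ j = M $ i $ j * D $ j $ j"
proof -
  have "(M ** D) $ i $ j = (\<Sum>k\<in>UNIV. if k = j then M $ i $ j * D $ j $ j else 0)"
    unfolding mult_comp
    by (rule sum.cong) (use assms in \<open>auto simp: diag_invertible_def\<close>)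
  then show ?thesis by simp
qed

lemma diag_nz:
  assumes "diag_invertible D"
  shows "D $ i $ i \<noteq> 0"
proof -
  obtain B where B: "D ** B = mat 1" using assms unfolding diag_invertible_def invertible_def by blast
  have "(D ** B) $ i $ i = D $ i $ i * B $ i $ i" by (rule diag_left[OF assms])
  moreover have "(D ** B) $ i $ i = 1" using B by (simp add: mat_def)
  ultimately show ?thesis by auto
qed

lemma Wmat_comp:
  "Wmat A q r w $ x $ y = A 0 $ x $ y + w * A 1 $ x $ y
     + ((w^2 - 1) / wden2 q r w) * A 2 $ x $ y + ((w^2 - 1) / wden3 q r w) * A 3 $ x $ y"
  by (simp add: Wmat_def cscale_def)

theorem proposition5p6:
  fixes q :: nat and A :: "nat \<Rightarrow> complex^'n^'n"
    and rp rm :: real and wp wm :: complex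
  assumes "even q" and "q \<ge> 4" and "CARD('n) = q^2 - 1"
    and "assoc_scheme 3 A"
    and "first_eigenmatrix 3 A (\<lambda>i j. complex_of_real (Pmat q i j))"
    and "rp^2 = (17 * real q - 1) * (real q - 1)" and "rp > 0"
    and "rm^2 = (17 * real q - 1) * (real q - 1)" and "rm < 0"
    and "wp \<noteq> 0" and "wp + 1 / wp = complex_of_real (a01 q rp)"
    and "wm \<noteq> 0" and "wm + 1 / wm = complex_of_real (a01 q rm)"
    and "wden2 q rp wp \<noteq> 0" and "wden3 q rp wp \<noteq> 0"
    and "wden2 q rm wm \<noteq> 0" and "wden3 q rm wm \<noteq> 0"
  shows "\<not> type_II_equiv (Wmat A q rp wp) (Wmat A q rm wm)"
proof
  assume "type_II_equiv (Wmat A q rp wp) (Wmat A q rm wm)"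
  then obtain D D' T T' where D: "diag_invertible D" and D': "diag_invertible D'"
    and T: "perm_matrix T" and T': "perm_matrix T'"
    and eq: "D ** Wmat A q rp wp ** D' = T ** Wmat A q rm wm ** T'"
    unfolding type_II_equiv_def by blast
  have q4: "real q \<ge> 4" using assms(2) by simp
  have wpnr: "wp^2 \<notin> \<real>"
    using quad_nonreal[OF assms(10,11)] a01_pos[OF q4 assms(6,7)] by blast
  have wmr: "wm \<in> \<real>"
    using quad_real[OF assms(12,13)] a01_neg[OF q4 assms(8,9)] by blast
  have sch: "assoc_scheme 3 A" by fact
  have A0: "A 0 = mat 1" using sch unfolding assoc_scheme_def by blast
  have b01: "\<And>i x y. i \<le> 3 \<Longrightarrow> A i $ x $ y = 0 \<or> A i $ x $ y = 1"
    using sch unfolding assoc_scheme_def by blast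
  have sym: "\<And>i x y. i \<le> 3 \<Longrightarrow> A i $ y $ x = A i $ x $ y"
  proof -
    fix i x y assume "i \<le> (3::nat)"
    then have "transpose (A i) = A i" using sch unfolding assoc_scheme_def by blast
    then have "transpose (A i) $ x $ y = A i $ x $ y" by simp
    then show "A i $ y $ x = A i $ x $ y" by (simp add: transpose_def)
  qed
  have nz: "A 1 \<noteq> 0" using sch unfolding assoc_scheme_def by fastforce
  have sum1: "\<And>x y. A 0 $ x $ y + A 1 $ x $ y + A 2 $ x $ y + A 3 $ x $ y = 1"
  proof -
    fix x y
    have "(\<Sum>i\<le>3. A i) = allones" using sch unfolding assoc_scheme_def by blast
    then have "(\<Sum>i\<le>3. A i) $ x $ y = 1" by (simp add: allones_def)
    then have "(\<Sum>i\<le>3. A i $ x $ y) = 1" by (simp add: sum_component)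
    then show "A 0 $ x $ y + A 1 $ x $ y + A 2 $ x $ y + A 3 $ x $ y = 1"
      by (simp add: eval_nat_numeral algebra_simps)
  qed
  obtain a b where ab: "A 1 $ a $ b \<noteq> 0" using nz by (metis vec_eq_iff zero_index)
  have ab1: "A 1 $ a $ b = 1" using ab b01[of 1 a b] by auto
  have ba1: "A 1 $ b $ a = 1" using ab1 sym[of 1 a b] by simp
  have diag: "\<And>x. A 0 $ x $ x = 1 \<and> A 1 $ x $ x = 0 \<and> A 2 $ x $ x = 0 \<and> A 3 $ x $ x = 0"
  proof -
    fix x
    have "A 0 $ x $ x = 1" using A0 by (simp add: mat_def)
    then show "A 0 $ x $ x = 1 \<and> A 1 $ x $ x = 0 \<and> A 2 $ x $ x = 0 \<and> A 3 $ x $ x = 0"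
      using sum1[of x x] b01[of 1 x x] b01[of 2 x x] b01[of 3 x x] by auto
  qed
  have neq: "a \<noteq> b" using diag ab1 by auto
  have A0ab: "A 0 $ a $ b = 0" "A 0 $ b $ a = 0" using A0 neq by (auto simp: mat_def)
  have off: "A 2 $ a $ b = 0 \<and> A 3 $ a $ b = 0 \<and> A 2 $ b $ a = 0 \<and> A 3 $ b $ a = 0"
    using sum1[of a b] sum1[of b a] A0ab ab1 ba1 b01[of 2 a b] b01[of 3 a b] b01[of 2 b a] b01[of 3 b a]
    by auto
  define Wp where "Wp = Wmat A q rp wp"
  have Wab: "Wp $ a $ b = wp" "Wp $ b $ a = wp" "Wp $ a $ a = 1" "Wp $ b $ b = 1"
    unfolding Wp_def Wmat_comp using off A0ab ab1 ba1 diag by auto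
  have realm: "real_mat (Wmat A q rm wm)"
    unfolding real_mat_def Wmat_comp
  proof (intro allI)
    fix x y
    have r: "A i $ x $ y \<in> \<real>" if "i \<le> 3" for i using b01[OF that, of x y] by auto
    have "wden2 q rm wm \<in> \<real>" "wden3 q rm wm \<in> \<real>" using wmr by (auto simp: wden2_def wden3_def)
    then show "A 0 $ x $ y + wm * A 1 $ x $ y + (wm\<^sup>2 - 1) / wden2 q rm wm * A 2 $ x $ y +
         (wm\<^sup>2 - 1) / wden3 q rm wm * A 3 $ x $ y \<in> \<real>"
      using r[of 0] r[of 1] r[of 2] r[of 3] wmr by auto
  qed
  have "real_mat (T ** Wmat A q rm wm ** T')"
    by (intro real_mat_mult perm_real T T' realm)
  then have R: "real_mat (D ** Wp ** D')" using eq Wp_def by simp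
  have E: "\<And>x y. (D ** Wp ** D') $ x $ y = D $ x $ x * Wp $ x $ y * D' $ y $ y"
    unfolding diag_right[OF D'] diag_left[OF D] by (rule refl)
  have "(D ** Wp ** D') $ a $ b * (D ** Wp ** D') $ b $ a
        / ((D ** Wp ** D') $ a $ a * (D ** Wp ** D') $ b $ b) = wp^2"
    unfolding E Wab using diag_nz[OF D, of a] diag_nz[OF D, of b] diag_nz[OF D', of a] diag_nz[OF D', of b]
    by (simp add: field_simps power2_eq_square)
  moreover have "(D ** Wp ** D') $ a $ b * (D ** Wp ** D') $ b $ a
        / ((D ** Wp ** D') $ a $ a * (D ** Wp ** D') $ b $ b) \<in> \<real>"
    using R unfolding real_mat_def by auto
  ultimately show False using wpnr by simp
qed

end
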